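(* Let $G=(V,E)$ be a finite undirected graph with $V \subset \mathbb{N}$, and let $\mathbf{p}=(p_e)_{e\in E}$ be any collection of probabilities $p_e\in[0,1]$. Let $\vec G(\mathbf{p})$ be the random orientation of $G$ in which each edge $e=\{x,y\}\in E$ with $x<y$ is oriented from $x$ to $y$ with probability $p_e$ and from $y$ to $x$ otherwise, independently over edges, with probability measure $\mathbb{P}_{G,\mathbf{p}}$. For a set $A\subset V$ and a vertex $y$, write $A\rightarrow y$ for the event that for some $x\in A$ there is a directed path from $x$ to $y$ in $\vec G(\mathbf{p})$. Then for any nonempty set $S\subset V$ and any vertices $a,b\in V$, \[\mathbb{P}_{G,\mathbf{p}}(S\rightarrow a \cap S\rightarrow b) \ge \mathbb{P}_{G,\mathbf{p}}(S\rightarrow a)\, \mathbb{P}_{G,\mathbf{p}}(S\rightarrow b).\]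
   Context: A directed path from $x$ to $x$ is taken to exist trivially (the path of length zero), so $S\rightarrow y$ always holds when $y\in S$. *)

theory Defs
  imports "HOL-Probability.Probability"
begin

definition fin_graph :: "nat set \<Rightarrow> nat set set \<Rightarrow> bool" where
  "fin_graph V E \<longleftrightarrow> finite V \<and> (\<forall>e\<in>E. e \<subseteq> V \<and> card e = 2)"

definition arcs :: "nat set set \<Rightarrow> (nat set \<Rightarrow> bool) \<Rightarrow> (nat \<times> nat) set" where
  "arcs E \<omega> = {(Min e, Max e) | e. e \<in> E \<and> \<omega> e} \<union> {(Max e, Min e) | e. e \<in> E \<and> \<not> \<omega> e}"

definition reaches :: "nat set set \<Rightarrow> (nat set \<Rightarrow> bool) \<Rightarrow> nat set \<Rightarrow> nat \<Rightarrow> bool" where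
  "reaches E \<omega> A y \<longleftrightarrow> (\<exists>x\<in>A. (x, y) \<in> (arcs E \<omega>)\<^sup>*)"

definition orient_pmf :: "nat set set \<Rightarrow> (nat set \<Rightarrow> real) \<Rightarrow> (nat set \<Rightarrow> bool) pmf" where
  "orient_pmf E p = Pi_pmf E False (\<lambda>e. bernoulli_pmf (p e))"

end

theory Submission
  imports Defs
begin

lemma prob_insert:
  assumes "finite A" "x \<notin> A" "0 \<le> q x" "q x \<le> 1"
  shows "measure_pmf.prob (Pi_pmf (insert x A) False (\<lambda>e. bernoulli_pmf (q e))) {w. Q w} =
    q x * measure_pmf.prob (Pi_pmf A False (\<lambda>e. bernoulli_pmf (q e))) {w. Q (w(x:=True))}
    + (1 - q x) * measure_pmf.prob (Pi_pmf A False (\<lambda>e. bernoulli_pmf (q e))) {w. Q (w(x:=False))}"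
proof -
  let ?B = "\<lambda>e. bernoulli_pmf (q e)"
  have eq: "Pi_pmf (insert x A) False ?B = bind_pmf (?B x) (\<lambda>y. map_pmf (\<lambda>f. f(x:=y)) (Pi_pmf A False ?B))"
    by (simp add: Pi_pmf_insert'[OF assms(1,2)] map_pmf_def)
  let ?M = "\<lambda>y. map_pmf (\<lambda>f. f(x:=y)) (Pi_pmf A False ?B)"
  have "measure_pmf.prob (bind_pmf (?B x) ?M) {w. Q w} = measure_pmf.expectation (?B x) (\<lambda>y. measure_pmf.prob (?M y) {w. Q w})"
    unfolding measure_pmf_bind
    by (rule measure_pmf.measure_bind[where N="count_space UNIV"]) (simp_all add: measure_pmf_in_subprob_algebra)
  also have "\<dots> = measure_pmf.prob (?M True) {w. Q w} * q x + measure_pmf.prob (?M False) {w. Q w} * (1 - q x)"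
    by (rule integral_bernoulli_pmf) (use assms in auto)
  also have "\<dots> = q x * measure_pmf.prob (Pi_pmf A False ?B) {w. Q (w(x:=True))}
    + (1 - q x) * measure_pmf.prob (Pi_pmf A False ?B) {w. Q (w(x:=False))}"
    by (simp only: measure_map_pmf vimage_Collect_eq mult.commute)
  finally show ?thesis unfolding eq .
qed

lemma arcs_insert: "arcs (insert e E) w = arcs E w \<union> {if w e then (Min e, Max e) else (Max e, Min e)}"
  unfolding arcs_def by auto

lemma arcs_upd: "e \<notin> E \<Longrightarrow> arcs E (w(e:=y)) = arcs E w"
proof -
  assume a: "e \<notin> E"
  have h: "\<And>e'. e' \<in> E \<Longrightarrow> (w(e:=y)) e' = w e'" using a by auto
  show ?thesis unfolding arcs_def
    apply (rule arg_cong2[where f="(\<union>)"])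
    using h by blast+
qed

lemma rt_add: "(x,y) \<in> (R \<union> {(u,w)})\<^sup>* \<Longrightarrow> (x,y)\<in>R\<^sup>* \<or> (w,y)\<in>R\<^sup>*"
proof (induction rule: rtrancl_induct)
  case base
  then show ?case by simp
next
  case (step a b)
  show ?case
  proof (cases "(a,b) = (u,w)")
    case True
    then show ?thesis by simp
  next
    case False
    then have ab: "(a,b) \<in> R" using step.hyps(2) by blast
    from step.IH show ?thesis
    proof
      assume "(x,a) \<in> R\<^sup>*" then show ?thesis using rtrancl_into_rtrancl[OF _ ab] by blast
    next
      assume "(w,a) \<in> R\<^sup>*" then show ?thesis using rtrancl_into_rtrancl[OF _ ab] by blast
    qed
  qed
qed

lemma reach_out: "s\<in>S \<Longrightarrow> (\<exists>x\<in>S. (x,y)\<in>(R\<union>{(s,v)})\<^sup>*) \<longleftrightarrow> (\<exists>x\<in>insert v S. (x,y)\<in>R\<^sup>*)"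
proof
  assume "\<exists>x\<in>S. (x,y)\<in>(R\<union>{(s,v)})\<^sup>*"
  then obtain x where "x\<in>S" "(x,y)\<in>(R\<union>{(s,v)})\<^sup>*" by blast
  then show "\<exists>x\<in>insert v S. (x,y)\<in>R\<^sup>*" using rt_add[of x y R s v] by blast
next
  assume s: "s\<in>S" and "\<exists>x\<in>insert v S. (x,y)\<in>R\<^sup>*"
  then obtain x where x: "x \<in> insert v S" "(x,y)\<in>R\<^sup>*" by blast
  have m: "(x,y)\<in>(R\<union>{(s,v)})\<^sup>*" using x(2) rtrancl_mono[of R "R\<union>{(s,v)}"] by blast
  show "\<exists>x\<in>S. (x,y)\<in>(R\<union>{(s,v)})\<^sup>*"
  proof (cases "x \<in> S")
    case True then show ?thesis using m by blast
  next
    case False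
    then have "x = v" using x by auto
    then have "(s,y)\<in>(R\<union>{(s,v)})\<^sup>*" using m converse_rtrancl_into_rtrancl[of s v "R\<union>{(s,v)}" y] by simp
    then show ?thesis using s by blast
  qed
qed

lemma reach_in: "s\<in>S \<Longrightarrow> (\<exists>x\<in>S. (x,y)\<in>(R\<union>{(v,s)})\<^sup>*) \<longleftrightarrow> (\<exists>x\<in>S. (x,y)\<in>R\<^sup>*)"
proof
  assume "s\<in>S" "\<exists>x\<in>S. (x,y)\<in>(R\<union>{(v,s)})\<^sup>*"
  then obtain x where "x\<in>S" "(x,y)\<in>(R\<union>{(v,s)})\<^sup>*" by blast
  then show "\<exists>x\<in>S. (x,y)\<in>R\<^sup>*" using rt_add[of x y R v s] \<open>s\<in>S\<close> by blast
next
  assume "\<exists>x\<in>S. (x,y)\<in>R\<^sup>*"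
  then show "\<exists>x\<in>S. (x,y)\<in>(R\<union>{(v,s)})\<^sup>*" using rtrancl_mono[of R "R\<union>{(v,s)}"] by blast
qed

lemma minmax2: "Min {u1,u2} = min u1 (u2::nat)" "Max {u1,u2} = max u1 u2" by simp_all

lemma reach_edge:
  assumes "s \<in> S" "v \<notin> S" "e = {s,v}"
  shows "reaches (insert e E) w S y \<longleftrightarrow> reaches E w (if w e = (s < v) then insert v S else S) y"
proof -
  have sv: "s \<noteq> v" using assms by auto
  have mm: "Min e = min s v" "Max e = max s v" unfolding assms(3) minmax2 by simp_all
  let ?P = "if w e then (Min e, Max e) else (Max e, Min e)"
  show ?thesis
  proof (cases "w e = (s < v)")
    case True
    then have P: "?P = (s,v)" unfolding mm using sv by (cases "s < v") (auto simp: min_def max_def)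
    show ?thesis unfolding reaches_def arcs_insert P using True reach_out[OF assms(1), of y "arcs E w" v] by simp
  next
    case False
    then have P: "?P = (v,s)" unfolding mm using sv by (cases "s < v") (auto simp: min_def max_def)
    show ?thesis unfolding reaches_def arcs_insert P using False reach_in[OF assms(1), of y "arcs E w" v] by simp
  qed
qed


lemma reach_closed:
  assumes "\<forall>e\<in>E. card e = 2" "\<not>(\<exists>e\<in>E. \<exists>s\<in>S. \<exists>v. v \<notin> S \<and> e = {s,v})"
  shows "reaches E w S y \<longleftrightarrow> y \<in> S"
proof
  assume "reaches E w S y"
  then obtain x where x: "x\<in>S" "(x,y)\<in>(arcs E w)\<^sup>*" unfolding reaches_def by blast
  show "y \<in> S" using x(2,1)
  proof (induction rule: rtrancl_induct)
    case base then show ?case .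
  next
    case (step z t)
    then have zS: "z \<in> S" by blast
    from step(2) obtain e where e: "e \<in> E" "(z,t) = (Min e, Max e) \<or> (z,t) = (Max e, Min e)"
      unfolding arcs_def by blast
    have c: "card e = 2" using assms(1) e(1) by blast
    then obtain u1 u2 where u: "e = {u1,u2}" "u1 \<noteq> u2" unfolding card_2_iff by blast
    note mm = minmax2[of u1 u2]
    have "{u1,u2} = {z,t}" using e(2) u(2) unfolding u(1) mm by (cases "u1 \<le> u2") (auto simp: min_def max_def)
    then have "e = {z,t}" using u(1) by simp
    show ?case
    proof (rule ccontr)
      assume "t \<notin> S"
      then show False using assms(2) e(1) zS \<open>e = {z,t}\<close> by blast
    qed
  qed
next
  assume "y \<in> S" then show "reaches E w S y" unfolding reaches_def by blast
qed

lemma main: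
  assumes "finite E" "\<forall>e\<in>E. card e = 2" "\<forall>e\<in>E. 0 \<le> p e \<and> p e \<le> 1"
  shows "measure_pmf.prob (orient_pmf E p) {w. reaches E w S a \<and> reaches E w S b}
         \<ge> measure_pmf.prob (orient_pmf E p) {w. reaches E w S a}
           * measure_pmf.prob (orient_pmf E p) {w. reaches E w S b}"
  using assms
proof (induction E arbitrary: S rule: finite_psubset_induct)
  case (psubset E)
  show ?case
  proof (cases "\<exists>e\<in>E. \<exists>s\<in>S. \<exists>v. v \<notin> S \<and> e = {s,v}")
    case False
    have r: "\<And>w y. reaches E w S y \<longleftrightarrow> y \<in> S"
      using reach_closed[OF _ False] psubset.prems(1) by blast
    show ?thesis unfolding r by (cases "a \<in> S"; cases "b \<in> S") auto
  next
    case True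
    then obtain e s v where e: "e \<in> E" "s \<in> S" "v \<notin> S" "e = {s,v}" by blast
    define E' where "E' = E - {e}"
    have EE: "E = insert e E'" "e \<notin> E'" "finite E'" "E' \<subset> E"
      using e(1) psubset.hyps(1) unfolding E'_def by auto
    define T where "T y = (if y = (s < v) then insert v S else S)" for y
    have key: "reaches E (w(e:=y)) S z = reaches E' w (T y) z" for w y z
    proof -
      have "reaches E (w(e:=y)) S z = reaches E' (w(e:=y)) (if (w(e:=y)) e = (s<v) then insert v S else S) z"
        unfolding EE(1) by (rule reach_edge[OF e(2,3,4)])
      also have "\<dots> = reaches E' w (T y) z"
        unfolding T_def reaches_def arcs_upd[OF EE(2)] by simp
      finally show ?thesis .
    qed
    let ?P = "\<lambda>A. measure_pmf.prob (orient_pmf E' p) A"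
    have pe: "0 \<le> p e" "p e \<le> 1" using psubset.prems(2) e(1) by auto
    have dec: "measure_pmf.prob (orient_pmf E p) {w. Q w} =
       p e * ?P {w. Q (w(e:=True))} + (1 - p e) * ?P {w. Q (w(e:=False))}" for Q
      unfolding orient_pmf_def EE(1) by (rule prob_insert[where q=p, OF EE(3,2) pe])
    define aT where "aT = ?P {w. reaches E' w (T True) a}"
    define aF where "aF = ?P {w. reaches E' w (T False) a}"
    define bT where "bT = ?P {w. reaches E' w (T True) b}"
    define bF where "bF = ?P {w. reaches E' w (T False) b}"
    define cT where "cT = ?P {w. reaches E' w (T True) a \<and> reaches E' w (T True) b}"
    define cF where "cF = ?P {w. reaches E' w (T False) a \<and> reaches E' w (T False) b}"
    have A: "measure_pmf.prob (orient_pmf E p) {w. reaches E w S a} = p e * aT + (1 - p e) * aF"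
      unfolding dec key aT_def aF_def ..
    have B: "measure_pmf.prob (orient_pmf E p) {w. reaches E w S b} = p e * bT + (1 - p e) * bF"
      unfolding dec key bT_def bF_def ..
    have C: "measure_pmf.prob (orient_pmf E p) {w. reaches E w S a \<and> reaches E w S b} = p e * cT + (1 - p e) * cF"
      unfolding dec key cT_def cF_def ..
    have pr2: "\<forall>e\<in>E'. card e = 2" "\<forall>e\<in>E'. 0 \<le> p e \<and> p e \<le> 1" using psubset.prems EE by auto
    have IT: "cT \<ge> aT * bT" unfolding aT_def bT_def cT_def using psubset.IH[OF EE(4) pr2] .
    have IF: "cF \<ge> aF * bF" unfolding aF_def bF_def cF_def using psubset.IH[OF EE(4) pr2] .
    have mono: "?P {w. reaches E' w X y} \<le> ?P {w. reaches E' w Y y}" if "X \<subseteq> Y" for X Y y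
      by (rule measure_pmf.finite_measure_mono) (use that in \<open>auto simp: reaches_def\<close>)
    have sg: "(aT - aF) * (bT - bF) \<ge> 0"
    proof (cases "s < v")
      case True
      then have "T False \<subseteq> T True" unfolding T_def by auto
      then have "aF \<le> aT" "bF \<le> bT" unfolding aT_def aF_def bT_def bF_def by (auto intro: mono)
      then show ?thesis by simp
    next
      case False
      then have "T True \<subseteq> T False" unfolding T_def by auto
      then have "aT \<le> aF" "bT \<le> bF" unfolding aT_def aF_def bT_def bF_def by (auto intro: mono)
      then show ?thesis by (simp add: mult_nonpos_nonpos)
    qed
    have id: "p e * (aT * bT) + (1 - p e) * (aF * bF) - (p e * aT + (1 - p e) * aF) * (p e * bT + (1 - p e) * bF)
       = p e * (1 - p e) * ((aT - aF) * (bT - bF))" by (simp add: algebra_simps)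
    have "p e * (1 - p e) * ((aT - aF) * (bT - bF)) \<ge> 0" using pe sg by simp
    moreover have "p e * cT + (1 - p e) * cF \<ge> p e * (aT * bT) + (1 - p e) * (aF * bF)"
      using IT IF pe by (intro add_mono mult_left_mono) auto
    ultimately show ?thesis unfolding A B C using id by linarith
  qed
qed

theorem theorem3:
  fixes V :: "nat set" and E :: "nat set set" and p :: "nat set \<Rightarrow> real"
    and S :: "nat set" and a b :: nat
  assumes "fin_graph V E"
    and "\<forall>e\<in>E. 0 \<le> p e \<and> p e \<le> 1"
    and "S \<subseteq> V" and "S \<noteq> {}"
    and "a \<in> V" and "b \<in> V"
  shows "measure_pmf.prob (orient_pmf E p) {\<omega>. reaches E \<omega> S a \<and> reaches E \<omega> S b}
         \<ge> measure_pmf.prob (orient_pmf E p) {\<omega>. reaches E \<omega> S a}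
           * measure_pmf.prob (orient_pmf E p) {\<omega>. reaches E \<omega> S b}"
proof -
  have fE: "finite E" "\<forall>e\<in>E. card e = 2"
  proof -
    have "finite V" "\<forall>e\<in>E. e \<subseteq> V \<and> card e = 2" using assms(1) unfolding fin_graph_def by auto
    then show "finite E" by (meson Pow_iff finite_Pow_iff finite_subset subsetI)
    show "\<forall>e\<in>E. card e = 2" using \<open>\<forall>e\<in>E. e \<subseteq> V \<and> card e = 2\<close> by blast
  qed
  show ?thesis using main[OF fE assms(2)] .
qed

end
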